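(* Let $\Delta$ be an even natural number, and for $j=1,2,\dots$ let $G_j$ be a graph on $n_j$ vertices with $n_j\to\infty$, of maximum degree $\Delta$, such that the number $z_j$ of vertices of $G_j$ of degree smaller than $\Delta$ satisfies $z_j=o(n_j)$. Then $\limsup_{j\to\infty}\alpha_{\mathrm{od}}(G_j)/n_j\le\frac{\Delta-1}{2\Delta-1}$.
   Context: An odd independent set in $G=(V,E)$ is an independent set $S$ such that every $v\in V\setminus S$ has either no neighbor or an odd number of neighbors in $S$; $\alpha_{\mathrm{od}}(G)$ is its maximum size. *)

theory Defs
  imports "HOL-Analysis.Analysis" "HOL-Library.Landau_Symbols"
begin

definition simple_graph :: "'a set \<Rightarrow> ('a \<Rightarrow> 'a \<Rightarrow> bool) \<Rightarrow> bool" where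
  "simple_graph V E \<longleftrightarrow> finite V \<and> (\<forall>u v. E u v \<longrightarrow> u \<in> V \<and> v \<in> V)
     \<and> (\<forall>u v. E u v \<longrightarrow> E v u) \<and> (\<forall>v. \<not> E v v)"

definition nbhd :: "'a set \<Rightarrow> ('a \<Rightarrow> 'a \<Rightarrow> bool) \<Rightarrow> 'a \<Rightarrow> 'a set" where
  "nbhd V E v = {u \<in> V. E v u}"

definition degree :: "'a set \<Rightarrow> ('a \<Rightarrow> 'a \<Rightarrow> bool) \<Rightarrow> 'a \<Rightarrow> nat" where
  "degree V E v = card (nbhd V E v)"

definition max_degree :: "'a set \<Rightarrow> ('a \<Rightarrow> 'a \<Rightarrow> bool) \<Rightarrow> nat" where
  "max_degree V E = Max (insert 0 (degree V E ` V))"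

definition independent_set :: "'a set \<Rightarrow> ('a \<Rightarrow> 'a \<Rightarrow> bool) \<Rightarrow> 'a set \<Rightarrow> bool" where
  "independent_set V E S \<longleftrightarrow> S \<subseteq> V \<and> (\<forall>u\<in>S. \<forall>v\<in>S. \<not> E u v)"

definition odd_independent_set :: "'a set \<Rightarrow> ('a \<Rightarrow> 'a \<Rightarrow> bool) \<Rightarrow> 'a set \<Rightarrow> bool" where
  "odd_independent_set V E S \<longleftrightarrow> independent_set V E S \<and>
     (\<forall>v \<in> V - S. card (nbhd V E v \<inter> S) = 0 \<or> odd (card (nbhd V E v \<inter> S)))"

definition alpha_od :: "'a set \<Rightarrow> ('a \<Rightarrow> 'a \<Rightarrow> bool) \<Rightarrow> nat" where
  "alpha_od V E = Max (card ` {S. odd_independent_set V E S})"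

end

theory Submission
  imports Defs
begin


lemma alpha_od_attained:
  assumes "simple_graph V E"
  shows "\<exists>S. odd_independent_set V E S \<and> alpha_od V E = card S"
proof -
  have fin: "finite V" using assms by (simp add: simple_graph_def)
  have "{S. odd_independent_set V E S} \<subseteq> Pow V"
    by (auto simp: odd_independent_set_def independent_set_def)
  hence f: "finite (card ` {S. odd_independent_set V E S})"
    using fin by (meson finite_Pow_iff finite_imageI finite_subset)
  have "odd_independent_set V E {}"
    by (simp add: odd_independent_set_def independent_set_def nbhd_def)
  hence ne: "card ` {S. odd_independent_set V E S} \<noteq> {}" by blast
  show ?thesis using Max_in[OF f ne] unfolding alpha_od_def by auto
qed

lemma degree_le_max:
  assumes "simple_graph V E" "v \<in> V"
  shows "degree V E v \<le> max_degree V E"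
proof -
  have "finite V" using assms by (simp add: simple_graph_def)
  thus ?thesis unfolding max_degree_def using assms(2) by (intro Max_ge) auto
qed

lemma sum_boole_card:
  assumes "finite A"
  shows "(\<Sum>v\<in>A. if P v then 1 else (0::nat)) = card {v \<in> A. P v}"
  using sum.inter_filter[OF assms, of "\<lambda>_. (1::nat)" P] by simp

lemma real_eq_aux:
  fixes D d n z :: real
  assumes "d \<noteq> 0" "n \<noteq> 0"
  shows "((D - 1) / d + D / d * (z / n)) * n = ((D - 1) * n + D * z) / d"
  using assms by (simp add: field_simps)

lemma key_bound:
  assumes g: "simple_graph V E" and md: "max_degree V E = \<Delta>" and ev: "even \<Delta>"
    and D: "\<Delta> > 0" and S: "odd_independent_set V E S"
  shows "(2*\<Delta> - 1) * card S \<le> (\<Delta> - 1) * card V + \<Delta> * card {v \<in> V. degree V E v < \<Delta>}"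
proof -
  define Z where "Z = {v \<in> V. degree V E v < \<Delta>}"
  have fin: "finite V" using g by (simp add: simple_graph_def)
  have SV: "S \<subseteq> V" and ind: "\<forall>u\<in>S. \<forall>v\<in>S. \<not> E u v"
    using S by (auto simp: odd_independent_set_def independent_set_def)
  have finS: "finite S" using SV fin finite_subset by blast
  have sym: "E u v = E v u" for u v using g by (auto simp: simple_graph_def)
  have nb: "nbhd V E u = {v \<in> V - S. E u v}" if "u \<in> S" for u
    using ind that by (auto simp: nbhd_def)
  have swap: "(\<Sum>u\<in>S. card {v \<in> V - S. E u v}) = (\<Sum>v\<in>V - S. card {u \<in> S. E v u})"
  proof -
    have "(\<Sum>u\<in>S. card {v \<in> V - S. E u v}) = (\<Sum>u\<in>S. \<Sum>v\<in>V - S. if E u v then 1 else 0)"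
      using fin by (simp add: sum_boole_card)
    also have "\<dots> = (\<Sum>v\<in>V - S. \<Sum>u\<in>S. if E u v then 1 else 0)" by (rule sum.swap)
    also have "\<dots> = (\<Sum>v\<in>V - S. card {u \<in> S. E v u})"
      using finS by (simp add: sum_boole_card sym)
    finally show ?thesis .
  qed
  have low: "\<Delta> * card S \<le> (\<Sum>u\<in>S. degree V E u) + \<Delta> * card Z"
  proof -
    have "\<Delta> * card S = (\<Sum>u\<in>S. \<Delta>)" by simp
    also have "\<dots> \<le> (\<Sum>u\<in>S. degree V E u + (if u \<in> Z then \<Delta> else 0))"
      by (intro sum_mono) (use SV in \<open>auto simp: Z_def\<close>)
    also have "\<dots> = (\<Sum>u\<in>S. degree V E u) + \<Delta> * card (S \<inter> Z)"
      using finS by (simp add: sum.distrib sum.If_cases)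
    finally have "\<Delta> * card S \<le> (\<Sum>u\<in>S. degree V E u) + \<Delta> * card (S \<inter> Z)" .
    moreover have "card (S \<inter> Z) \<le> card Z" using fin by (intro card_mono) (auto simp: Z_def)
    ultimately show ?thesis by (meson add_left_mono le_trans mult_le_mono2)
  qed
  have up: "card {u \<in> S. E v u} \<le> \<Delta> - 1" if v: "v \<in> V - S" for v
  proof -
    have eq: "{u \<in> S. E v u} = nbhd V E v \<inter> S" using SV by (auto simp: nbhd_def)
    have "card (nbhd V E v \<inter> S) \<le> degree V E v"
      unfolding degree_def using fin by (intro card_mono) (auto simp: nbhd_def)
    also have "\<dots> \<le> \<Delta>" using degree_le_max[OF g] v md by auto
    finally have le: "card (nbhd V E v \<inter> S) \<le> \<Delta>" .
    have "card (nbhd V E v \<inter> S) = 0 \<or> odd (card (nbhd V E v \<inter> S))"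
      using S v by (auto simp: odd_independent_set_def)
    hence "card (nbhd V E v \<inter> S) \<noteq> \<Delta>" using ev D by auto
    thus ?thesis using le eq by simp
  qed
  have B1: "\<Delta> * card S \<le> (\<Sum>v\<in>V - S. card {u \<in> S. E v u}) + \<Delta> * card Z"
    using low swap nb by (simp add: degree_def)
  have B2: "(\<Sum>v\<in>V - S. card {u \<in> S. E v u}) \<le> (\<Sum>v\<in>V - S. \<Delta> - 1)"
    by (intro sum_mono up)
  have B3: "(\<Sum>v\<in>V - S. \<Delta> - 1) = (\<Delta> - 1) * (card V - card S)"
    using fin SV by (simp add: card_Diff_subset finite_subset)
  have A: "\<Delta> * card S \<le> (\<Delta> - 1) * (card V - card S) + \<Delta> * card Z"
    using B1 B2 B3 by linarith
  have cS: "card S \<le> card V" using SV fin card_mono by blast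
  have "(2*\<Delta> - 1) * card S = \<Delta> * card S + (\<Delta> - 1) * card S" using D
    by (simp add: algebra_simps)
  also have "\<dots> \<le> (\<Delta> - 1) * (card V - card S) + (\<Delta> - 1) * card S + \<Delta> * card Z" using A by simp
  also have "(\<Delta> - 1) * (card V - card S) + (\<Delta> - 1) * card S = (\<Delta> - 1) * card V"
    using cS by (metis add_mult_distrib2 le_add_diff_inverse2)
  finally show ?thesis by (simp add: Z_def)
qed


theorem proposition4:
  fixes \<Delta> :: nat
    and V :: "nat \<Rightarrow> 'a set" and E :: "nat \<Rightarrow> 'a \<Rightarrow> 'a \<Rightarrow> bool"
  assumes "even \<Delta>"
    and graphs: "\<And>j. simple_graph (V j) (E j)"
    and n_inf: "filterlim (\<lambda>j. card (V j)) at_top sequentially"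
    and maxdeg: "\<And>j. max_degree (V j) (E j) = \<Delta>"
    and z_small: "(\<lambda>j. real (card {v \<in> V j. degree (V j) (E j) v < \<Delta>}))
                    \<in> o(\<lambda>j. real (card (V j)))"
  shows "limsup (\<lambda>j. ereal (real (alpha_od (V j) (E j)) / real (card (V j))))
           \<le> ereal ((real \<Delta> - 1) / (2 * real \<Delta> - 1))"
proof -
  define c where "c = (real \<Delta> - 1) / (2 * real \<Delta> - 1)"
  define k where "k = real \<Delta> / (2 * real \<Delta> - 1)"
  define z where "z j = card {v \<in> V j. degree (V j) (E j) v < \<Delta>}" for j
  define r where "r j = real (z j) / real (card (V j))" for j
  have r0: "r \<longlonglongrightarrow> 0" unfolding r_def z_def by (rule smalloD_tendsto[OF z_small])
  have lim: "(\<lambda>j. ereal (c + k * r j)) \<longlonglongrightarrow> ereal c"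
    using tendsto_add[OF tendsto_const tendsto_mult[OF tendsto_const r0], of c k] by auto
  have evn: "eventually (\<lambda>j. card (V j) \<ge> 1) sequentially"
    using n_inf by (simp add: filterlim_at_top)
  have bound: "real (alpha_od (V j) (E j)) / real (card (V j)) \<le> c + k * r j"
    if n1: "card (V j) \<ge> 1" for j
  proof -
    obtain S where S: "odd_independent_set (V j) (E j) S" and a: "alpha_od (V j) (E j) = card S"
      using alpha_od_attained[OF graphs] by blast
    have npos: "real (card (V j)) > 0" using n1 by simp
    have rnn: "r j \<ge> 0" unfolding r_def by simp
    show ?thesis
    proof (cases "\<Delta> = 0")
      case True
      have fin: "finite (V j)" using graphs by (simp add: simple_graph_def)
      have "card S \<le> card (V j)" using S fin
        by (intro card_mono) (auto simp: odd_independent_set_def independent_set_def)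
      hence "real (card S) / real (card (V j)) \<le> 1" using npos by simp
      thus ?thesis using True a by (simp add: c_def k_def)
    next
      case False
      have kb: "(2*\<Delta> - 1) * card S \<le> (\<Delta> - 1) * card (V j) + \<Delta> * z j"
        unfolding z_def using key_bound[OF graphs maxdeg \<open>even \<Delta>\<close> _ S] False by simp
      hence "real ((2*\<Delta> - 1) * card S) \<le> real ((\<Delta> - 1) * card (V j) + \<Delta> * z j)"
        by linarith
      hence kr: "(2 * real \<Delta> - 1) * real (card S) \<le> (real \<Delta> - 1) * real (card (V j)) + real \<Delta> * real (z j)"
        using False by (simp add: of_nat_diff)
      have dpos: "2 * real \<Delta> - 1 > 0" using False by simp
      have eq: "(c + k * r j) * real (card (V j)) = ((real \<Delta> - 1) * real (card (V j)) + real \<Delta> * real (z j)) / (2 * real \<Delta> - 1)"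
        using npos dpos unfolding c_def k_def r_def by (intro real_eq_aux) auto
      have "real (card S) \<le> ((real \<Delta> - 1) * real (card (V j)) + real \<Delta> * real (z j)) / (2 * real \<Delta> - 1)"
        using kr dpos by (simp add: pos_le_divide_eq mult.commute)
      hence "real (card S) / real (card (V j)) \<le> c + k * r j"
        using npos eq by (simp add: pos_divide_le_eq)
      thus ?thesis using a by simp
    qed
  qed
  have "limsup (\<lambda>j. ereal (real (alpha_od (V j) (E j)) / real (card (V j))))
        \<le> limsup (\<lambda>j. ereal (c + k * r j))"
    by (intro Limsup_mono eventually_mono[OF evn]) (simp add: bound)
  also have "limsup (\<lambda>j. ereal (c + k * r j)) = ereal c"
    by (rule lim_imp_Limsup[OF trivial_limit_sequentially lim])
  finally show ?thesis by (simp add: c_def)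
qed

end
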